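(* Let $\mathcal{M}\subseteq\binom{[n]}{k}$ be a positroid with Grassmann necklace $(I_1,\dots,I_n)$ and decorated permutation $\pi^{:}=(\pi,col)$, and let $j\in[n]$ with $\pi(j)\neq j$. Put $\mathcal{M}':=\{H\in\mathcal{M} : j\in H\}$. Then for every $a\in[n]$ with $j\notin I_a$, the set $I_a\setminus I_j$ is nonempty and $$\bigl(I_a\setminus\{\max_a(I_a\setminus I_j)\}\bigr)\cup\{j\}\in\mathcal{M}'.$$
   Context: Indices are taken modulo $n$; we identify $[n]$ with $\mathbb{Z}_n$. For $t\in[n]$, the total order $\le_t$ on $[n]$ is $t<_t t+1<_t\cdots<_t n<_t 1<_t\cdots<_t t-1$. For $A,B\in\binom{[n]}{k}$ with $A=\{i_1<_t\cdots<_t i_k\}$ and $B=\{j_1<_t\cdots<_t j_k\}$, write $A\le_t B$ (Gale order) iff $i_s\le_t j_s$ for all $s$. For $D\subseteq[n]$, $\max_a(D)$ is the largest element of $D$ in $\le_a$. A Grassmann necklace is a sequence $(I_1,\dots,I_n)$ of subsets of $[n]$ such that for each $i$: if $i\in I_i$ then $I_{i+1}=(I_i\setminus\{i\})\cup\{j'\}$ for some $j'\in[n]$, and if $i\notin I_i$ then $I_{i+1}=I_i$. A positroid is a set $\mathcal{M}\subseteq\binom{[n]}{k}$ for which there is a Grassmann necklace $(I_1,\dots,I_n)$ with $\mathcal{M}=\{H : H\ge_t I_t \text{ for all } t\in[n]\}$; then $I_t$ is the $\le_t$-minimum of $\mathcal{M}$ and $(I_1,\dots,I_n)$ is called the Grassmann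 necklace of $\mathcal{M}$. A decorated permutation is a pair $(\pi,col)$ with $\pi\in S_n$ and $col$ a function from the fixed points of $\pi$ to $\{1,-1\}$. The necklace and decorated permutation correspond bijectively via: if $I_{i+1}=(I_i\setminus\{i\})\cup\{j'\}$ with $j'\ne i$ then $\pi(i)=j'$; if $I_{i+1}=I_i$ and $i\notin I_i$ then $\pi(i)=i$, $col(i)=1$; if $I_{i+1}=I_i$ and $i\in I_i$ then $\pi(i)=i$, $col(i)=-1$. Conversely $I_r=\{i\in[n] : i<_r\pi^{-1}(i)\text{ or }(\pi(i)=i\text{ and }col(i)=-1)\}$. *)

theory Defs
  imports Main
begin

text \<open>Ground set [n] = {1..n}, identified with Z_n; the cyclic successor of i is
  (i mod n) + 1, so the successor of n is 1.\<close>

definition cyc_succ :: "nat \<Rightarrow> nat \<Rightarrow> nat" where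
  "cyc_succ n i = (i mod n) + 1"

text \<open>Position of i (in [n]) in the total order <=_t :
  t <_t t+1 <_t ... <_t n <_t 1 <_t ... <_t t-1 (t has position 0).\<close>
definition crank :: "nat \<Rightarrow> nat \<Rightarrow> nat \<Rightarrow> nat" where
  "crank n t i = (i + n - t) mod n"

definition cle :: "nat \<Rightarrow> nat \<Rightarrow> nat \<Rightarrow> nat \<Rightarrow> bool" where
  "cle n t i j \<longleftrightarrow> crank n t i \<le> crank n t j"

text \<open>Gale order A <=_t B: with A = {i_1 <_t ... <_t i_k}, B = {j_1 <_t ... <_t j_k},
  i_s <=_t j_s for all s.  The s-th element in <=_t order is read off through the
  order embedding crank n t.\<close>
definition gale_le :: "nat \<Rightarrow> nat \<Rightarrow> nat set \<Rightarrow> nat set \<Rightarrow> bool" where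
  "gale_le n t A B \<longleftrightarrow> card A = card B \<and>
     (\<forall>s < card A. sorted_list_of_set (crank n t ` A) ! s
                    \<le> sorted_list_of_set (crank n t ` B) ! s)"

definition cmax :: "nat \<Rightarrow> nat \<Rightarrow> nat set \<Rightarrow> nat" where
  "cmax n a D = (THE x. x \<in> D \<and> (\<forall>y\<in>D. cle n a y x))"

text \<open>Grassmann necklace (indices in [n], I (n+1) read as I 1 via cyc_succ).\<close>
definition grassmann_necklace :: "nat \<Rightarrow> (nat \<Rightarrow> nat set) \<Rightarrow> bool" where
  "grassmann_necklace n I \<longleftrightarrow>
     (\<forall>i\<in>{1..n}. I i \<subseteq> {1..n}) \<and>
     (\<forall>i\<in>{1..n}.
        (i \<in> I i \<longrightarrow> (\<exists>j'\<in>{1..n}. I (cyc_succ n i) = (I i - {i}) \<union> {j'})) \<and>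
        (i \<notin> I i \<longrightarrow> I (cyc_succ n i) = I i))"

definition ksubsets :: "nat \<Rightarrow> nat \<Rightarrow> nat set set" where
  "ksubsets n k = {H. H \<subseteq> {1..n} \<and> card H = k}"

text \<open>M is a positroid in binom([n],k) with Grassmann necklace I
  (the I_t are k-subsets, as the Gale order is only defined on k-subsets).\<close>
definition positroid_necklace :: "nat \<Rightarrow> nat \<Rightarrow> nat set set \<Rightarrow> (nat \<Rightarrow> nat set) \<Rightarrow> bool" where
  "positroid_necklace n k M I \<longleftrightarrow>
     grassmann_necklace n I \<and> (\<forall>t\<in>{1..n}. card (I t) = k) \<and>
     M \<subseteq> ksubsets n k \<and>
     M = {H \<in> ksubsets n k. \<forall>t\<in>{1..n}. gale_le n t (I t) H}"

text \<open>Permutation part of the decorated permutation associated to the necklace.\<close>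
definition neck_perm :: "nat \<Rightarrow> (nat \<Rightarrow> nat set) \<Rightarrow> nat \<Rightarrow> nat" where
  "neck_perm n I i =
     (if i \<in> I i then (THE j'. j' \<in> {1..n} \<and> I (cyc_succ n i) = (I i - {i}) \<union> {j'})
      else i)"

definition neck_col :: "nat \<Rightarrow> (nat \<Rightarrow> nat set) \<Rightarrow> nat \<Rightarrow> int" where
  "neck_col n I i = (if i \<in> I i then -1 else 1)"

end

theory Submission
  imports Defs
begin


lemma crank_eq: "t \<in> {1..n} \<Longrightarrow> y \<in> {1..n} \<Longrightarrow>
   crank n t y = (if t \<le> y then y - t else y + n - t)"
  unfolding crank_def
proof -
  assume t: "t \<in> {1..n}" and y: "y \<in> {1..n}"
  show "(y + n - t) mod n = (if t \<le> y then y - t else y + n - t)"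
  proof (cases "t \<le> y")
    case True
    then have "y + n - t = (y - t) + n" by simp
    then have "(y + n - t) mod n = (y - t) mod n" by simp
    also have "\<dots> = y - t" using t y by auto
    finally show ?thesis using True by simp
  next
    case False
    then show ?thesis using t y by auto
  qed
qed

lemma succ_eq: "i \<in> {1..n} \<Longrightarrow> cyc_succ n i = (if i = n then 1 else i + 1)"
  unfolding cyc_succ_def by auto



lemma arith_PF1: "t \<in> {1..n} \<Longrightarrow> a \<in> {1..n} \<Longrightarrow> y \<in> {1..n} \<Longrightarrow> q \<in> {1..n} \<Longrightarrow> q \<noteq> y \<Longrightarrow>
  crank n t y < crank n t a \<Longrightarrow>
  ((crank n t y < crank n t q) \<longleftrightarrow> (crank n a y < crank n a q) \<or> \<not> crank n t q < crank n t a) \<and>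
  (crank n a y < crank n a q \<longrightarrow> crank n t q < crank n t a)"
  by (auto simp: crank_eq split: if_splits)
lemma arith_PF2: "t \<in> {1..n} \<Longrightarrow> a \<in> {1..n} \<Longrightarrow> y \<in> {1..n} \<Longrightarrow> q \<in> {1..n} \<Longrightarrow> q \<noteq> y \<Longrightarrow>
  \<not> crank n t y < crank n t a \<Longrightarrow>
  ((crank n a y < crank n a q) \<longleftrightarrow> (crank n t y < crank n t q) \<or> crank n t q < crank n t a) \<and>
  (crank n t y < crank n t q \<longrightarrow> \<not> crank n t q < crank n t a)"
  by (auto simp: crank_eq split: if_splits)
lemma arith2: "i \<in> {1..n} \<Longrightarrow> i' \<in> {1..n} \<Longrightarrow> y \<in> {1..n} \<Longrightarrow> y \<noteq> i \<Longrightarrow> y \<noteq> i' \<Longrightarrow> i \<noteq> i' \<Longrightarrow>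
  \<not> crank n i' y < crank n i' i \<Longrightarrow> \<not> crank n i y < crank n i i' \<Longrightarrow> False"
  by (auto simp: crank_eq split: if_splits)



lemma card_swap_notin:
  assumes "finite A" "i \<in> A" "card ((A - {i}) \<union> {x}) = card A"
  shows "x \<notin> A - {i}"
proof
  assume "x \<in> A - {i}"
  then have "(A - {i}) \<union> {x} = A - {i}" by auto
  then have "card ((A - {i}) \<union> {x}) = card A - 1" using assms by (simp add: card_Diff_singleton)
  moreover have "card A \<noteq> 0" using assms by auto
  ultimately show False using assms(3) by simp
qed

lemma arith1: "i \<in> {1..n} \<Longrightarrow> r \<in> {1..n} \<Longrightarrow> y \<in> {1..n} \<Longrightarrow> y \<noteq> i \<Longrightarrow>
  crank n r y < crank n r i \<Longrightarrow> \<not> crank n (cyc_succ n i) y < crank n (cyc_succ n i) r"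
  by (cases "i = n") (auto simp: crank_eq succ_eq split: if_splits)

lemma gstep: assumes gn: "grassmann_necklace n I" and i: "i \<in> {1..n}"
  shows "(i \<in> I i \<longrightarrow> (\<exists>j'\<in>{1..n}. I (cyc_succ n i) = (I i - {i}) \<union> {j'})) \<and> (i \<notin> I i \<longrightarrow> I (cyc_succ n i) = I i)"
proof -
  have "\<forall>i\<in>{1..n}. (i \<in> I i \<longrightarrow> (\<exists>j'\<in>{1..n}. I (cyc_succ n i) = (I i - {i}) \<union> {j'})) \<and> (i \<notin> I i \<longrightarrow> I (cyc_succ n i) = I i)"
    using gn unfolding grassmann_necklace_def by (rule conjunct2)
  then show ?thesis using i by (rule bspec)
qed

locale neck =
  fixes n k :: nat and I :: "nat \<Rightarrow> nat set"
  assumes gn: "grassmann_necklace n I" and cardI: "\<forall>t\<in>{1..n}. card (I t) = k"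
begin

abbreviation "P \<equiv> neck_perm n I"
abbreviation "sc \<equiv> cyc_succ n"

lemma sub: "t \<in> {1..n} \<Longrightarrow> I t \<subseteq> {1..n}"
proof -
  have "\<forall>i\<in>{1..n}. I i \<subseteq> {1..n}" using gn unfolding grassmann_necklace_def by (rule conjunct1)
  then show "t \<in> {1..n} \<Longrightarrow> I t \<subseteq> {1..n}" by blast
qed

lemma fin: "t \<in> {1..n} \<Longrightarrow> finite (I t)"
  using sub finite_subset by blast

lemma sc_in: "i \<in> {1..n} \<Longrightarrow> sc i \<in> {1..n}"
  by (simp add: succ_eq)

lemma step1:
  assumes i: "i \<in> {1..n}" and ii: "i \<in> I i"
  shows "P i \<in> {1..n} \<and> I (sc i) = (I i - {i}) \<union> {P i} \<and> P i \<notin> I i - {i}"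
proof -
  have ex: "\<exists>j'\<in>{1..n}. I (sc i) = (I i - {i}) \<union> {j'}"
    using gstep[OF gn i] ii by blast
  have nin: "x \<notin> I i - {i}" if "I (sc i) = (I i - {i}) \<union> {x}" for x
  proof (rule card_swap_notin[OF fin[OF i] ii])
    have "card (I (sc i)) = k" using cardI sc_in[OF i] by blast
    moreover have "card (I i) = k" using cardI i by blast
    ultimately show "card ((I i - {i}) \<union> {x}) = card (I i)" using that by simp
  qed
  from ex obtain j' where j': "j' \<in> {1..n}" "I (sc i) = (I i - {i}) \<union> {j'}" by blast
  have "P i = (THE j'. j' \<in> {1..n} \<and> I (sc i) = (I i - {i}) \<union> {j'})"
    using ii by (simp add: neck_perm_def)
  also have "\<dots> = j'"
  proof (rule the_equality)
    show "j' \<in> {1..n} \<and> I (sc i) = (I i - {i}) \<union> {j'}" using j' by simp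
  next
    fix x assume "x \<in> {1..n} \<and> I (sc i) = (I i - {i}) \<union> {x}"
    then have a: "I (sc i) = (I i - {i}) \<union> {x}" by simp
    then have "x \<notin> I i - {i}" by (rule nin)
    moreover have "j' \<notin> I i - {i}" using nin j' by blast
    ultimately show "x = j'" using a j'(2) by blast
  qed
  finally have "P i = j'" .
  then show ?thesis using j' nin by blast
qed

lemma step0:
  assumes i: "i \<in> {1..n}" and ii: "i \<notin> I i"
  shows "P i = i \<and> I (sc i) = I i"
proof -
  have "I (sc i) = I i" using gstep[OF gn i] ii by blast
  moreover have "P i = i" using ii by (simp add: neck_perm_def)
  ultimately show ?thesis by simp
qed

lemma P_in: assumes i: "i \<in> {1..n}" shows "P i \<in> {1..n}"
proof (cases "i \<in> I i")
  case True
  then show ?thesis using step1[OF i True] by blast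
next
  case False
  then show ?thesis using step0[OF i False] i by simp
qed

lemma keep:
  assumes i: "i \<in> {1..n}" and y: "y \<in> I i" and d: "i \<noteq> y \<or> P i = i"
  shows "y \<in> I (sc i)"
proof (cases "i \<in> I i")
  case True
  have e: "I (sc i) = (I i - {i}) \<union> {P i}" using step1[OF i True] by blast
  show ?thesis
  proof (cases "i = y")
    case True
    then have "P i = i" using d by simp
    then have "y \<in> (I i - {i}) \<union> {P i}" using True by simp
    then show ?thesis using e by simp
  next
    case False
    then have "y \<in> (I i - {i}) \<union> {P i}" using y by simp
    then show ?thesis using e by simp
  qed
next
  case False
  then show ?thesis using step0[OF i False] y by simp
qed

lemma pred_ex:
  assumes r: "r \<in> {1..n}" and s: "s \<in> {1..n}" and c: "crank n s r = Suc d"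
  shows "\<exists>r'\<in>{1..n}. sc r' = r \<and> crank n s r' = d"
proof -
  define r' where "r' = (if r = 1 then n else r - 1)"
  have r': "r' \<in> {1..n}" using r unfolding r'_def by auto
  have "sc r' = r" using r r' unfolding r'_def by (auto simp: succ_eq)
  moreover have "crank n s r' = d"
    using c r s r' crank_eq[OF s r'] crank_eq[OF s r]
    unfolding r'_def by (auto split: if_splits)
  ultimately show ?thesis using r' by blast
qed

lemma persist_aux:
  assumes s: "s \<in> {1..n}" and y: "y \<in> I s"
    and kp: "\<And>z. z \<in> {1..n} \<Longrightarrow> crank n s z < crank n s r \<Longrightarrow> y \<in> I z \<Longrightarrow> y \<in> I (sc z)"
  shows "\<forall>r'\<in>{1..n}. crank n s r' = d \<longrightarrow> d \<le> crank n s r \<longrightarrow> y \<in> I r'"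
proof (induction d)
  case 0
  show ?case
  proof (intro ballI impI)
    fix r' assume r': "r' \<in> {1..n}" "crank n s r' = 0"
    then have "r' = s" using crank_eq[OF s r'(1)] s by (auto split: if_splits)
    then show "y \<in> I r'" using y by simp
  qed
next
  case (Suc d)
  show ?case
  proof (intro ballI impI)
    fix r' assume r': "r' \<in> {1..n}" "crank n s r' = Suc d" "Suc d \<le> crank n s r"
    obtain q where q: "q \<in> {1..n}" "sc q = r'" "crank n s q = d" using pred_ex[OF r'(1) s r'(2)] by blast
    have "d \<le> crank n s r" using r'(3) by simp
    then have "y \<in> I q" using Suc.IH q(1,3) by blast
    moreover have "crank n s q < crank n s r" using q(3) r'(3) by simp
    ultimately have "y \<in> I (sc q)" using kp q(1) by blast
    then show "y \<in> I r'" using q by simp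
  qed
qed

lemma persist:
  assumes s: "s \<in> {1..n}" and r: "r \<in> {1..n}" and y: "y \<in> I s"
    and kp: "\<And>z. z \<in> {1..n} \<Longrightarrow> crank n s z < crank n s r \<Longrightarrow> y \<in> I z \<Longrightarrow> y \<in> I (sc z)"
  shows "y \<in> I r"
proof -
  have "\<forall>r'\<in>{1..n}. crank n s r' = crank n s r \<longrightarrow> crank n s r \<le> crank n s r \<longrightarrow> y \<in> I r'"
    by (rule persist_aux[OF s y kp])
  then show ?thesis using r by blast
qed

lemma persist2:
  assumes s: "s \<in> {1..n}" and r: "r \<in> {1..n}" and y: "y \<in> I s"
    and kp: "\<And>z. z \<in> {1..n} \<Longrightarrow> crank n s z < crank n s r \<Longrightarrow> z \<noteq> y"
  shows "y \<in> I r"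
proof (rule persist[OF s r y])
  fix z assume "z \<in> {1..n}" "crank n s z < crank n s r" "y \<in> I z"
  then show "y \<in> I (sc z)" using kp keep by blast
qed

lemma fixed_mem:
  assumes i: "i \<in> {1..n}" and f: "P i = i" and r: "r \<in> {1..n}"
  shows "i \<in> I r \<longleftrightarrow> i \<in> I i"
proof
  assume "i \<in> I r"
  show "i \<in> I i"
  proof (rule persist2[OF r i \<open>i \<in> I r\<close>])
    fix z assume "z \<in> {1..n}" "crank n r z < crank n r i"
    then show "z \<noteq> i" by (metis less_irrefl)
  qed
next
  assume "i \<in> I i"
  show "i \<in> I r"
    by (rule persist[OF i r \<open>i \<in> I i\<close>]) (use keep f in blast)
qed

lemma nonfixed:
  assumes i: "i \<in> {1..n}" and f: "P i \<noteq> i"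
  shows "i \<in> I i" "P i \<notin> I i" "I (sc i) = (I i - {i}) \<union> {P i}"
proof -
  show ii: "i \<in> I i" using step0[OF i] f by blast
  show "P i \<notin> I i" using step1[OF i ii] f by blast
  show "I (sc i) = (I i - {i}) \<union> {P i}" using step1[OF i ii] by blast
qed

lemma nonfixed_mem:
  assumes i: "i \<in> {1..n}" and f: "P i \<noteq> i" and r: "r \<in> {1..n}"
  shows "P i \<in> I r \<longleftrightarrow> crank n r (P i) < crank n r i"
proof
  have y: "P i \<in> {1..n}" using P_in i by blast
  assume a: "P i \<in> I r"
  show "crank n r (P i) < crank n r i"
  proof (rule ccontr)
    assume "\<not> crank n r (P i) < crank n r i"
    then have "P i \<in> I i"
      by (intro persist2[OF r i a]) (metis less_irrefl)
    then show False using nonfixed[OF i f] by blast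
  qed
next
  have y: "P i \<in> {1..n}" using P_in i by blast
  assume a: "crank n r (P i) < crank n r i"
  have b: "P i \<in> I (sc i)" using nonfixed[OF i f] by blast
  show "P i \<in> I r"
  proof (rule persist2[OF sc_in[OF i] r b])
    fix z assume z: "z \<in> {1..n}" "crank n (sc i) z < crank n (sc i) r"
    show "z \<noteq> P i"
    proof
      assume "z = P i"
      then have "crank n (cyc_succ n i) (P i) < crank n (cyc_succ n i) r" using z by simp
      then show False using arith1[OF i r y f a] by blast
    qed
  qed
qed

end



context neck begin

lemma P_inj: "inj_on P {1..n}"
proof (rule inj_onI)
  fix i i' assume i: "i \<in> {1..n}" and i': "i' \<in> {1..n}" and e: "P i = P i'"
  show "i = i'"
  proof (rule ccontr)
    assume ne: "i \<noteq> i'"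
    have y: "P i \<in> {1..n}" using P_in i by blast
    consider "P i = i" "P i' = i'" | "P i = i" "P i' \<noteq> i'" | "P i \<noteq> i" "P i' = i'" | "P i \<noteq> i" "P i' \<noteq> i'"
      by blast
    then show False
    proof cases
      case 1 then show ?thesis using e ne by simp
    next
      case 2
      have a: "P i' \<notin> I i'" using nonfixed[OF i' 2(2)] by blast
      have b: "P i' \<in> I (sc i')" using nonfixed[OF i' 2(2)] by blast
      have "P i' = i" using 2 e by simp
      then show ?thesis using fixed_mem[OF i 2(1) i'] fixed_mem[OF i 2(1) sc_in[OF i']] a b by simp
    next
      case 3
      have a: "P i \<notin> I i" using nonfixed[OF i 3(1)] by blast
      have b: "P i \<in> I (sc i)" using nonfixed[OF i 3(1)] by blast
      have "P i = i'" using 3 e by simp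
      then show ?thesis using fixed_mem[OF i' 3(2) i] fixed_mem[OF i' 3(2) sc_in[OF i]] a b by simp
    next
      case 4
      have a: "P i \<notin> I i'" using nonfixed[OF i' 4(2)] e by simp
      have b: "P i \<notin> I i" using nonfixed[OF i 4(1)] by simp
      have c1: "\<not> crank n i' (P i) < crank n i' i" using nonfixed_mem[OF i 4(1) i'] a by simp
      have c2: "\<not> crank n i (P i) < crank n i i'" using nonfixed_mem[OF i' 4(2) i] b e by simp
      show ?thesis using arith2[OF i i' y 4(1)] 4(2) e ne c1 c2 by simp
    qed
  qed
qed

lemma P_img: "P ` {1..n} = {1..n}"
  using endo_inj_surj[of "{1..n}" P] P_inj P_in by blast

definition Q where "Q y = the_inv_into {1..n} P y"

lemma Q_in: "y \<in> {1..n} \<Longrightarrow> Q y \<in> {1..n}"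
  unfolding Q_def using the_inv_into_into[OF P_inj] P_img by blast

lemma PQ: "y \<in> {1..n} \<Longrightarrow> P (Q y) = y"
  unfolding Q_def using f_the_inv_into_f[OF P_inj] P_img by blast

lemma QP: "i \<in> {1..n} \<Longrightarrow> Q (P i) = i"
  unfolding Q_def using the_inv_into_f_f[OF P_inj] by blast

lemma memb:
  assumes y: "y \<in> {1..n}" and r: "r \<in> {1..n}"
  shows "y \<in> I r \<longleftrightarrow> (Q y \<noteq> y \<and> crank n r y < crank n r (Q y)) \<or> (Q y = y \<and> y \<in> I y)"
proof (cases "Q y = y")
  case True
  then have "P y = y" using PQ[OF y] by simp
  then show ?thesis using fixed_mem[OF y _ r] True by simp
next
  case False
  have q: "Q y \<in> {1..n}" using Q_in[OF y] .
  have "P (Q y) \<noteq> Q y" using PQ[OF y] False by simp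
  then show ?thesis using nonfixed_mem[OF q _ r] PQ[OF y] False by simp
qed

lemma conserv:
  assumes U: "U \<subseteq> {1..n}"
  shows "card {y\<in>U. Q y \<notin> U} = card {z\<in>{1..n} - U. Q z \<in> U}"
proof -
  have fU: "finite U" using U finite_subset by blast
  have img: "P ` U = {y\<in>U. Q y \<in> U} \<union> {z\<in>{1..n} - U. Q z \<in> U}"
  proof
    show "P ` U \<subseteq> {y\<in>U. Q y \<in> U} \<union> {z\<in>{1..n} - U. Q z \<in> U}"
    proof
      fix z assume "z \<in> P ` U"
      then obtain u where u: "u \<in> U" "z = P u" by blast
      have "Q z = u" using QP u U by blast
      moreover have "z \<in> {1..n}" using P_in u U by blast
      ultimately show "z \<in> {y\<in>U. Q y \<in> U} \<union> {z\<in>{1..n} - U. Q z \<in> U}" using u by blast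
    qed
  next
    show "{y\<in>U. Q y \<in> U} \<union> {z\<in>{1..n} - U. Q z \<in> U} \<subseteq> P ` U"
    proof
      fix z assume z: "z \<in> {y\<in>U. Q y \<in> U} \<union> {z\<in>{1..n} - U. Q z \<in> U}"
      then have "z \<in> {1..n}" "Q z \<in> U" using U by blast+
      then show "z \<in> P ` U" using PQ by (metis image_eqI)
    qed
  qed
  have "card (P ` U) = card U" using card_image[OF inj_on_subset[OF P_inj U]] .
  moreover have "card (P ` U) = card {y\<in>U. Q y \<in> U} + card {z\<in>{1..n} - U. Q z \<in> U}"
    unfolding img by (rule card_Un_disjoint) (use fU in auto)
  moreover have "card U = card {y\<in>U. Q y \<in> U} + card {y\<in>U. Q y \<notin> U}"
  proof -
    have "U = {y\<in>U. Q y \<in> U} \<union> {y\<in>U. Q y \<notin> U}" by blast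
    then have "card U = card ({y\<in>U. Q y \<in> U} \<union> {y\<in>U. Q y \<notin> U})" by simp
    also have "\<dots> = card {y\<in>U. Q y \<in> U} + card {y\<in>U. Q y \<notin> U}"
      by (rule card_Un_disjoint) (use fU in auto)
    finally show ?thesis .
  qed
  ultimately show ?thesis by simp
qed

lemma PF:
  assumes t: "t \<in> {1..n}" and a: "a \<in> {1..n}" and y: "y \<in> {1..n}"
  defines "U \<equiv> {y\<in>{1..n}. crank n t y < crank n t a}"
  shows "y \<in> U \<Longrightarrow> (y \<in> I t \<longleftrightarrow> y \<in> I a \<or> Q y \<notin> U) \<and> (y \<in> I a \<longrightarrow> Q y \<in> U)"
    and "y \<notin> U \<Longrightarrow> (y \<in> I a \<longleftrightarrow> y \<in> I t \<or> Q y \<in> U) \<and> (y \<in> I t \<longrightarrow> Q y \<notin> U)"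
proof -
  have q: "Q y \<in> {1..n}" using Q_in[OF y] .
  have mt: "y \<in> I t \<longleftrightarrow> (Q y \<noteq> y \<and> crank n t y < crank n t (Q y)) \<or> (Q y = y \<and> y \<in> I y)"
    by (rule memb[OF y t])
  have ma: "y \<in> I a \<longleftrightarrow> (Q y \<noteq> y \<and> crank n a y < crank n a (Q y)) \<or> (Q y = y \<and> y \<in> I y)"
    by (rule memb[OF y a])
  show "y \<in> U \<Longrightarrow> (y \<in> I t \<longleftrightarrow> y \<in> I a \<or> Q y \<notin> U) \<and> (y \<in> I a \<longrightarrow> Q y \<in> U)"
  proof -
    assume yU: "y \<in> U"
    show ?thesis
    proof (cases "Q y = y")
      case True then show ?thesis using mt ma yU by simp
    next
      case False
      have c: "crank n t y < crank n t a" using yU unfolding U_def by simp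
      have "Q y \<in> U \<longleftrightarrow> crank n t (Q y) < crank n t a" unfolding U_def using q by simp
      then show ?thesis using arith_PF1[OF t a y q False c] mt ma False by simp
    qed
  qed
  show "y \<notin> U \<Longrightarrow> (y \<in> I a \<longleftrightarrow> y \<in> I t \<or> Q y \<in> U) \<and> (y \<in> I t \<longrightarrow> Q y \<notin> U)"
  proof -
    assume yU: "y \<notin> U"
    show ?thesis
    proof (cases "Q y = y")
      case True then show ?thesis using mt ma yU by simp
    next
      case False
      have c: "\<not> crank n t y < crank n t a" using yU y unfolding U_def by simp
      have "Q y \<in> U \<longleftrightarrow> crank n t (Q y) < crank n t a" unfolding U_def using q by simp
      then show ?thesis using arith_PF2[OF t a y q False c] mt ma False by simp
    qed
  qed
qed

lemma GI:
  assumes t: "t \<in> {1..n}" and a: "a \<in> {1..n}" and S: "S \<subseteq> {1..n}"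
  defines "U \<equiv> {y\<in>{1..n}. crank n t y < crank n t a}"
  shows "card (I t \<inter> S) + card {y \<in> S - U. Q y \<in> U} = card (I a \<inter> S) + card {y \<in> S \<inter> U. Q y \<notin> U}"
proof -
  have fS: "finite S" using S finite_subset by blast
  have e1: "I t \<inter> (S \<inter> U) = (I a \<inter> (S \<inter> U)) \<union> {y \<in> S \<inter> U. Q y \<notin> U}"
    using PF(1)[OF t a] S unfolding U_def by blast
  have e2: "I a \<inter> (S - U) = (I t \<inter> (S - U)) \<union> {y \<in> S - U. Q y \<in> U}"
    using PF(2)[OF t a] S unfolding U_def by blast
  have d1: "(I a \<inter> (S \<inter> U)) \<inter> {y \<in> S \<inter> U. Q y \<notin> U} = {}"
    using PF(1)[OF t a] S unfolding U_def by blast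
  have d2: "(I t \<inter> (S - U)) \<inter> {y \<in> S - U. Q y \<in> U} = {}"
    using PF(2)[OF t a] S unfolding U_def by blast
  have c1: "card (I t \<inter> (S \<inter> U)) = card (I a \<inter> (S \<inter> U)) + card {y \<in> S \<inter> U. Q y \<notin> U}"
    unfolding e1 by (rule card_Un_disjoint) (use fS d1 in auto)
  have c2: "card (I a \<inter> (S - U)) = card (I t \<inter> (S - U)) + card {y \<in> S - U. Q y \<in> U}"
    unfolding e2 by (rule card_Un_disjoint) (use fS d2 in auto)
  have sp: "card (X \<inter> S) = card (X \<inter> (S \<inter> U)) + card (X \<inter> (S - U))" for X
  proof -
    have "X \<inter> S = (X \<inter> (S \<inter> U)) \<union> (X \<inter> (S - U))" by blast
    then have "card (X \<inter> S) = card ((X \<inter> (S \<inter> U)) \<union> (X \<inter> (S - U)))" by simp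
    also have "\<dots> = card (X \<inter> (S \<inter> U)) + card (X \<inter> (S - U))"
      by (rule card_Un_disjoint) (use fS in auto)
    finally show ?thesis .
  qed
  show ?thesis using sp[of "I t"] sp[of "I a"] c1 c2 by simp
qed

end


lemma arM: "a \<in> {1..n} \<Longrightarrow> m \<in> {1..n} \<Longrightarrow> q \<in> {1..n} \<Longrightarrow> j \<in> {1..n} \<Longrightarrow> m \<noteq> j \<Longrightarrow> q \<noteq> m \<Longrightarrow>
  crank n a m < crank n a q \<Longrightarrow> \<not> crank n j m < crank n j q \<Longrightarrow> crank n a m < crank n a j \<and> crank n a j \<le> crank n a q"
  by (auto simp: crank_eq split: if_splits)
lemma arB1: "t \<in> {1..n} \<Longrightarrow> a \<in> {1..n} \<Longrightarrow> y \<in> {1..n} \<Longrightarrow> q \<in> {1..n} \<Longrightarrow>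
  crank n t y < crank n t q \<Longrightarrow> crank n t q < crank n t a \<Longrightarrow> crank n a y < crank n a q"
  by (auto simp: crank_eq split: if_splits)
lemma arB2: "t \<in> {1..n} \<Longrightarrow> j \<in> {1..n} \<Longrightarrow> y \<in> {1..n} \<Longrightarrow> q \<in> {1..n} \<Longrightarrow>
  crank n t y < crank n t j \<Longrightarrow> crank n t j < crank n t q \<Longrightarrow> crank n j q < crank n j y"
  by (auto simp: crank_eq split: if_splits)
lemma arC: "t \<in> {1..n} \<Longrightarrow> a \<in> {1..n} \<Longrightarrow> m \<in> {1..n} \<Longrightarrow> j \<in> {1..n} \<Longrightarrow>
  crank n t j < crank n t m \<Longrightarrow> crank n t m < crank n t a \<Longrightarrow> crank n a j < crank n a m"
  by (auto simp: crank_eq split: if_splits)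
lemma arD: "t \<in> {1..n} \<Longrightarrow> a \<in> {1..n} \<Longrightarrow> m \<in> {1..n} \<Longrightarrow> y \<in> {1..n} \<Longrightarrow>
  crank n t a \<le> crank n t m \<Longrightarrow> crank n t y < crank n t a \<Longrightarrow> crank n a m < crank n a y"
  by (auto simp: crank_eq split: if_splits)
lemma arE: "t \<in> {1..n} \<Longrightarrow> a \<in> {1..n} \<Longrightarrow> j \<in> {1..n} \<Longrightarrow> m \<in> {1..n} \<Longrightarrow>
  crank n t a \<le> crank n t j \<Longrightarrow> crank n t j < crank n t m \<Longrightarrow> crank n a j < crank n a m"
  by (auto simp: crank_eq split: if_splits)
lemma arF: "t \<in> {1..n} \<Longrightarrow> a \<in> {1..n} \<Longrightarrow> j \<in> {1..n} \<Longrightarrow> q \<in> {1..n} \<Longrightarrow>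
  crank n t j < crank n t a \<Longrightarrow> crank n a j \<le> crank n a q \<Longrightarrow> crank n t q < crank n t a"
  by (auto simp: crank_eq split: if_splits)
lemma crank_self: "j \<in> {1..n} \<Longrightarrow> crank n j j = 0"
  by (simp add: crank_eq)



lemma crank_inj: "t \<in> {1..n} \<Longrightarrow> y \<in> {1..n} \<Longrightarrow> z \<in> {1..n} \<Longrightarrow> crank n t y = crank n t z \<Longrightarrow> y = z"
  by (auto simp: crank_eq split: if_splits)

lemma crank_inj_on: "t \<in> {1..n} \<Longrightarrow> inj_on (crank n t) {1..n}"
  by (meson crank_inj inj_onI)

lemma sl_a:
  fixes U :: "nat set"
  assumes fU: "finite U" and s: "s < card {u\<in>U. u \<le> x}"
  shows "sorted_list_of_set U ! s \<le> x"
proof (rule ccontr)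
  define L where "L = sorted_list_of_set U"
  assume "\<not> sorted_list_of_set U ! s \<le> x"
  then have lt: "x < L ! s" unfolding L_def by simp
  have setL: "set L = U" unfolding L_def using fU by simp
  have sL: "sorted L" unfolding L_def by simp
  have len: "length L = card U" unfolding L_def by simp
  have sub: "{u\<in>U. u \<le> x} \<subseteq> (\<lambda>i. L ! i) ` {..<s}"
  proof
    fix u assume u: "u \<in> {u\<in>U. u \<le> x}"
    then obtain i where i: "i < length L" "u = L ! i" using setL by (metis (no_types, lifting) in_set_conv_nth mem_Collect_eq)
    have "i < s"
    proof (rule ccontr)
      assume "\<not> i < s"
      then have "L ! s \<le> L ! i" using sorted_nth_mono[OF sL] i(1) by simp
      then show False using lt u i(2) by simp
    qed
    then show "u \<in> (\<lambda>i. L ! i) ` {..<s}" using i(2) by blast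
  qed
  have "card {u\<in>U. u \<le> x} \<le> card ((\<lambda>i. L ! i) ` {..<s})" by (rule card_mono) (simp_all add: sub)
  also have "\<dots> \<le> card {..<s}" by (rule card_image_le) simp
  finally show False using s by simp
qed

lemma sl_b:
  fixes U :: "nat set"
  assumes fU: "finite U" and s: "s < card U"
  shows "s < card {u\<in>U. u \<le> sorted_list_of_set U ! s}"
proof -
  define L where "L = sorted_list_of_set U"
  have setL: "set L = U" unfolding L_def using fU by simp
  have sL: "sorted L" unfolding L_def by simp
  have dL: "distinct L" unfolding L_def by simp
  have len: "length L = card U" unfolding L_def by simp
  have sub: "(\<lambda>i. L ! i) ` {..s} \<subseteq> {u\<in>U. u \<le> L ! s}"
  proof
    fix u assume "u \<in> (\<lambda>i. L ! i) ` {..s}"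
    then obtain i where i: "i \<le> s" "u = L ! i" by blast
    have "L ! i \<le> L ! s" using sorted_nth_mono[OF sL i(1)] s len by simp
    moreover have "L ! i \<in> U" using setL i s len by (metis le_less_trans nth_mem)
    ultimately show "u \<in> {u\<in>U. u \<le> L ! s}" using i by simp
  qed
  have inj: "inj_on (\<lambda>i. L ! i) {..s}"
    by (rule inj_onI) (use dL s len in \<open>simp add: nth_eq_iff_index_eq\<close>)
  have "card {..s} = card ((\<lambda>i. L ! i) ` {..s})" using card_image[OF inj] by simp
  also have "\<dots> \<le> card {u\<in>U. u \<le> L ! s}" by (rule card_mono) (use fU sub in simp_all)
  finally show ?thesis unfolding L_def by simp
qed

lemma gale_counts:
  fixes U V :: "nat set"
  assumes fU: "finite U" and fV: "finite V" and c: "card U = card V"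
    and cnt: "\<And>x. card {v\<in>V. v \<le> x} \<le> card {u\<in>U. u \<le> x}"
    and s: "s < card U"
  shows "sorted_list_of_set U ! s \<le> sorted_list_of_set V ! s"
proof -
  have "s < card {v\<in>V. v \<le> sorted_list_of_set V ! s}" using sl_b[OF fV] s c by simp
  also have "\<dots> \<le> card {u\<in>U. u \<le> sorted_list_of_set V ! s}" by (rule cnt)
  finally show ?thesis by (rule sl_a[OF fU])
qed

lemma gale_from_counts:
  assumes t: "t \<in> {1..n}" and A: "A \<subseteq> {1..n}" and B: "B \<subseteq> {1..n}" and c: "card A = card B"
    and cnt: "\<And>x. card {y\<in>B. crank n t y \<le> x} \<le> card {y\<in>A. crank n t y \<le> x}"
  shows "gale_le n t A B"
proof -
  have inj: "inj_on (crank n t) {1..n}" by (rule crank_inj_on[OF t])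
  have iA: "inj_on (crank n t) A" using inj_on_subset[OF inj A] .
  have iB: "inj_on (crank n t) B" using inj_on_subset[OF inj B] .
  have fA: "finite A" using A finite_subset by blast
  have fB: "finite B" using B finite_subset by blast
  have cA: "card (crank n t ` A) = card A" using card_image[OF iA] .
  have cB: "card (crank n t ` B) = card B" using card_image[OF iB] .
  have e: "{v\<in>crank n t ` X. v \<le> x} = crank n t ` {y\<in>X. crank n t y \<le> x}" for X x by blast
  have cnt': "card {v\<in>crank n t ` B. v \<le> x} \<le> card {v\<in>crank n t ` A. v \<le> x}" for x
  proof -
    have "card {v\<in>crank n t ` B. v \<le> x} = card {y\<in>B. crank n t y \<le> x}"
      unfolding e by (rule card_image) (rule inj_on_subset[OF iB], blast)
    moreover have "card {v\<in>crank n t ` A. v \<le> x} = card {y\<in>A. crank n t y \<le> x}"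
      unfolding e by (rule card_image) (rule inj_on_subset[OF iA], blast)
    ultimately show ?thesis using cnt by simp
  qed
  show ?thesis unfolding gale_le_def
  proof (intro conjI allI impI)
    show "card A = card B" by (rule c)
    fix s assume s: "s < card A"
    show "sorted_list_of_set (crank n t ` A) ! s \<le> sorted_list_of_set (crank n t ` B) ! s"
      by (rule gale_counts) (use fA fB cA cB c cnt' s in auto)
  qed
qed

lemma cmax_prop:
  assumes a: "a \<in> {1..n}" and Dn: "D \<subseteq> {1..n}" and ne: "D \<noteq> {}"
  shows "cmax n a D \<in> D \<and> (\<forall>y\<in>D. crank n a y \<le> crank n a (cmax n a D))"
proof -
  have fD: "finite D" using Dn finite_subset by blast
  define M where "M = Max (crank n a ` D)"
  have "M \<in> crank n a ` D" unfolding M_def using fD ne by simp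
  then obtain m where m: "m \<in> D" "crank n a m = M" by blast
  have mx: "\<forall>y\<in>D. crank n a y \<le> crank n a m" using m fD unfolding M_def by simp
  have "cmax n a D = m" unfolding cmax_def cle_def
  proof (rule the_equality)
    show "m \<in> D \<and> (\<forall>y\<in>D. crank n a y \<le> crank n a m)" using m mx by simp
  next
    fix x assume x: "x \<in> D \<and> (\<forall>y\<in>D. crank n a y \<le> crank n a x)"
    then have "crank n a x = crank n a m" using mx m by (meson le_antisym)
    then show "x = m" using crank_inj[OF a] x m Dn by blast
  qed
  then show ?thesis using m mx by simp
qed




context neck begin

lemma main:
  assumes j: "j \<in> {1..n}" and pj: "P j \<noteq> j" and a: "a \<in> {1..n}" and ja: "j \<notin> I a"
  shows "I a - I j \<noteq> {} \<and>
    ((I a - {cmax n a (I a - I j)}) \<union> {j}) \<in> ksubsets n k \<and>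
    (\<forall>t\<in>{1..n}. gale_le n t (I t) ((I a - {cmax n a (I a - I j)}) \<union> {j}))"
proof -
  have jj: "j \<in> I j" using nonfixed(1)[OF j pj] .
  have fa: "finite (I a)" using fin[OF a] .
  have Dne: "I a - I j \<noteq> {}"
  proof
    assume "I a - I j = {}"
    then have "I a \<subseteq> I j" by blast
    moreover have "card (I a) = card (I j)" using cardI a j by simp
    ultimately have "I a = I j" using card_subset_eq[OF fin[OF j]] by blast
    then show False using jj ja by simp
  qed
  define m where "m = cmax n a (I a - I j)"
  have cm: "m \<in> I a - I j \<and> (\<forall>y\<in>I a - I j. crank n a y \<le> crank n a m)"
    unfolding m_def by (rule cmax_prop[OF a _ Dne]) (use sub[OF a] in blast)
  have ma: "m \<in> I a" and mj: "m \<notin> I j" and mx: "\<And>y. y \<in> I a \<Longrightarrow> y \<notin> I j \<Longrightarrow> crank n a y \<le> crank n a m"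
    using cm by auto
  have mn: "m \<in> {1..n}" using ma sub[OF a] by blast
  have Qmn: "Q m \<in> {1..n}" using Q_in[OF mn] .
  have Qm: "Q m \<noteq> m"
  proof
    assume "Q m = m"
    then show False using memb[OF mn a] memb[OF mn j] ma mj by simp
  qed
  have m1: "crank n a m < crank n a (Q m)" using memb[OF mn a] ma Qm by simp
  have m2: "\<not> crank n j m < crank n j (Q m)" using memb[OF mn j] mj Qm by simp
  have mjne: "m \<noteq> j" using ma ja by blast
  have M12: "crank n a m < crank n a j \<and> crank n a j \<le> crank n a (Q m)"
    by (rule arM[OF a mn Qmn j mjne Qm m1 m2])
  have M1: "crank n a m < crank n a j" using M12 by simp
  have M2: "crank n a j \<le> crank n a (Q m)" using M12 by simp
  have Qj: "Q j \<noteq> j" using PQ[OF j] pj by metis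
  have Qjn: "Q j \<in> {1..n}" using Q_in[OF j] .
  have j1: "\<not> crank n a j < crank n a (Q j)" using memb[OF j a] ja Qj by simp
  define w where "w = P j"
  have wn: "w \<in> {1..n}" unfolding w_def using P_in[OF j] .
  have Qw: "Q w = j" unfolding w_def using QP[OF j] .
  have wj: "w \<noteq> j" unfolding w_def using pj .
  define H where "H = (I a - {m}) \<union> {j}"
  have Hsub: "H \<subseteq> {1..n}" unfolding H_def using sub[OF a] j by blast
  have cH: "card H = k"
  proof -
    have "card (I a - {m}) = k - 1" using card_Diff_singleton[OF ma] cardI a by simp
    moreover have "j \<notin> I a - {m}" using ja by blast
    moreover have "finite (I a - {m})" using fa by simp
    ultimately have "card H = k - 1 + 1" unfolding H_def by simp
    moreover have "card (I a) \<noteq> 0" using ma fa by auto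
    then have "k \<noteq> 0" using cardI a by simp
    ultimately show ?thesis by simp
  qed
  have gale: "gale_le n t (I t) H" if t: "t \<in> {1..n}" for t
  proof (rule gale_from_counts[OF t sub[OF t] Hsub])
    show "card (I t) = card H" using cH cardI t by simp
    fix x
    define S where "S = {y\<in>{1..n}. crank n t y \<le> x}"
    define U where "U = {y\<in>{1..n}. crank n t y < crank n t a}"
    have Sn: "S \<subseteq> {1..n}" unfolding S_def by blast
    have Un: "U \<subseteq> {1..n}" unfolding U_def by blast
    have fS: "finite S" using Sn finite_subset by blast
    have fn: "finite {1..n}" by simp
    have eH: "{y\<in>H. crank n t y \<le> x} = H \<inter> S" unfolding S_def using Hsub by blast
    have eI: "{y\<in>I t. crank n t y \<le> x} = I t \<inter> S" unfolding S_def using sub[OF t] by blast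
    define e where "e = (if j \<in> S \<and> m \<notin> S then 1 else 0::nat)"
    have hc: "card (H \<inter> S) \<le> card (I a \<inter> S) + e"
    proof (cases "m \<in> S")
      case True
      have hs: "H \<inter> S \<subseteq> insert j ((I a \<inter> S) - {m})" unfolding H_def by blast
      have "card (H \<inter> S) \<le> card (insert j ((I a \<inter> S) - {m}))" by (rule card_mono[OF _ hs]) (use fS in simp)
      also have "\<dots> \<le> Suc (card ((I a \<inter> S) - {m}))" by (rule card_insert_le_m1) simp_all
      also have "\<dots> = card (I a \<inter> S)"
      proof -
        have mi: "m \<in> I a \<inter> S" using True ma by simp
        have fi: "finite (I a \<inter> S)" using fS by simp
        have "card (I a \<inter> S) \<noteq> 0" using mi fi by auto
        then show ?thesis using card_Diff_singleton[OF mi] by simp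
      qed
      finally show ?thesis by simp
    next
      case False
      show ?thesis
      proof (cases "j \<in> S")
        case True
        have "H \<inter> S = insert j (I a \<inter> S)" unfolding H_def using True False by blast
        then have "card (H \<inter> S) = Suc (card (I a \<inter> S))" using ja fS by simp
        then show ?thesis unfolding e_def using True False by simp
      next
        case False
        have hs: "H \<inter> S \<subseteq> I a \<inter> S" unfolding H_def using False by blast
        have "card (H \<inter> S) \<le> card (I a \<inter> S)" by (rule card_mono[OF _ hs]) (use fS in simp)
        then show ?thesis by simp
      qed
    qed
    define A1 where "A1 = card {y \<in> S - U. Q y \<in> U}"
    define A2 where "A2 = card {y \<in> S \<inter> U. Q y \<notin> U}"
    have gi: "card (I t \<inter> S) + A1 = card (I a \<inter> S) + A2"
      unfolding A1_def A2_def U_def by (rule GI[OF t a Sn])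
    have key: "A1 + e \<le> A2"
    proof (cases "crank n t a \<le> x")
      case True
      have SU: "S \<inter> U = U" unfolding S_def U_def using True by auto
      have A2c: "A2 = card {z\<in>{1..n} - U. Q z \<in> U}" unfolding A2_def SU using conserv[OF Un] .
      show ?thesis
      proof (cases "j \<in> S \<and> m \<notin> S")
        case False
        then have "e = 0" unfolding e_def by simp
        moreover have "A1 \<le> A2" unfolding A1_def A2c
          by (rule card_mono) (use Sn in auto)
        ultimately show ?thesis by simp
      next
        case jm: True
        then have e1: "e = 1" unfolding e_def by simp
        have cj: "crank n t j \<le> x" using jm unfolding S_def by simp
        have cm': "x < crank n t m" using jm mn unfolding S_def by simp
        have tj: "crank n t j < crank n t a"
        proof (rule ccontr)
          assume "\<not> crank n t j < crank n t a"
          then have "crank n a j < crank n a m" using arE[OF t a j mn] cj cm' by simp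
          then show False using M1 by simp
        qed
        have QmU: "Q m \<in> U" unfolding U_def using arF[OF t a j Qmn tj M2] Qmn by simp
        have mU: "m \<notin> U" unfolding U_def using True cm' by simp
        have sub2: "insert m {y \<in> S - U. Q y \<in> U} \<subseteq> {z\<in>{1..n} - U. Q z \<in> U}"
          using Sn mn QmU mU by auto
        have "card (insert m {y \<in> S - U. Q y \<in> U}) \<le> A2" unfolding A2c
          by (rule card_mono[OF _ sub2]) simp
        moreover have "card (insert m {y \<in> S - U. Q y \<in> U}) = A1 + 1"
          unfolding A1_def using jm fS by simp
        ultimately show ?thesis using e1 by simp
      qed
    next
      case False
      have SU: "S - U = {}" unfolding S_def U_def using False by auto
      have A10: "A1 = 0" unfolding A1_def SU by simp
      show ?thesis
      proof (cases "j \<in> S \<and> m \<notin> S")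
        case False
        then have "e = 0" unfolding e_def by simp
        then show ?thesis using A10 by simp
      next
        case jm: True
        then have e1: "e = 1" unfolding e_def by simp
        have cj: "crank n t j \<le> x" using jm unfolding S_def by simp
        have cm': "x < crank n t m" using jm mn unfolding S_def by simp
        have xa: "x < crank n t a" using False by simp
        have tam: "crank n t a \<le> crank n t m"
        proof (rule ccontr)
          assume "\<not> crank n t a \<le> crank n t m"
          then have "crank n a j < crank n a m" using arC[OF t a mn j] cj cm' by simp
          then show False using M1 by simp
        qed
        define Pj where "Pj = {y\<in>{1..n}. crank n t y \<le> crank n t j}"
        have Pjn: "Pj \<subseteq> {1..n}" unfolding Pj_def by blast
        have wP: "w \<notin> Pj"
        proof
          assume "w \<in> Pj"
          then have "crank n t w \<le> crank n t j" unfolding Pj_def by simp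
          moreover have "crank n t w \<noteq> crank n t j" using crank_inj[OF t wn j] wj by blast
          ultimately have tw: "crank n t w < crank n t j" by simp
          have "crank n a w < crank n a j" using arB1[OF t a wn j tw] cj xa by simp
          then have wa: "w \<in> I a" using memb[OF wn a] Qw wj by simp
          have wnj: "w \<notin> I j" using memb[OF wn j] Qw wj crank_self[OF j] by simp
          have "crank n a w \<le> crank n a m" using mx[OF wa wnj] .
          moreover have "crank n a m < crank n a w" using arD[OF t a mn wn tam] tw cj xa by simp
          ultimately show False by simp
        qed
        have "card {z\<in>{1..n} - Pj. Q z \<in> Pj} \<noteq> 0"
        proof -
          have "w \<in> {z\<in>{1..n} - Pj. Q z \<in> Pj}" using wn wP Qw j unfolding Pj_def by simp
          moreover have "finite {z\<in>{1..n} - Pj. Q z \<in> Pj}" by simp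
          ultimately show ?thesis using card_0_eq by blast
        qed
        then have "card {y\<in>Pj. Q y \<notin> Pj} \<noteq> 0" using conserv[OF Pjn] by simp
        then have "{y\<in>Pj. Q y \<notin> Pj} \<noteq> {}" by (intro notI) simp
        then obtain y where y: "y \<in> Pj" "Q y \<notin> Pj" by blast
        have yn: "y \<in> {1..n}" using y Pjn by blast
        have Qyn: "Q y \<in> {1..n}" using Q_in[OF yn] .
        have ty: "crank n t y \<le> crank n t j" using y unfolding Pj_def by simp
        have tq: "crank n t j < crank n t (Q y)" using y Qyn unfolding Pj_def by simp
        have QyU: "Q y \<notin> U"
        proof
          assume "Q y \<in> U"
          then have qa: "crank n t (Q y) < crank n t a" unfolding U_def by simp
          show False
          proof (cases "y = j")
            case True
            have "crank n a j < crank n a (Q j)" using arB1[OF t a j Qjn] tq qa True by simp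
            then show False using j1 by simp
          next
            case False
            have ne: "crank n t y \<noteq> crank n t j" using crank_inj[OF t yn j] False by blast
            then have ty': "crank n t y < crank n t j" using ty by simp
            have Qyy: "Q y \<noteq> y" using ty tq by auto
            have "crank n a y < crank n a (Q y)" using arB1[OF t a yn Qyn] ty' tq qa by simp
            then have ya: "y \<in> I a" using memb[OF yn a] Qyy by simp
            have "crank n j (Q y) < crank n j y" using arB2[OF t j yn Qyn ty' tq] .
            then have ynj: "y \<notin> I j" using memb[OF yn j] Qyy by simp
            have "crank n a y \<le> crank n a m" using mx[OF ya ynj] .
            moreover have "crank n a m < crank n a y" using arD[OF t a mn yn tam] ty' cj xa by simp
            ultimately show False by simp
          qed
        qed
        have yS: "y \<in> S \<inter> U" unfolding S_def U_def using yn ty cj xa by simp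
        have "y \<in> {y \<in> S \<inter> U. Q y \<notin> U}" using yS QyU by simp
        then have "A2 \<noteq> 0" unfolding A2_def using fS by auto
        then show ?thesis using A10 e1 by simp
      qed
    qed
    show "card {y\<in>H. crank n t y \<le> x} \<le> card {y\<in>I t. crank n t y \<le> x}"
      unfolding eH eI using hc gi key by simp
  qed
  have Hk: "H \<in> ksubsets n k" unfolding ksubsets_def using Hsub cH by simp
  show ?thesis using Dne Hk gale unfolding H_def m_def by blast
qed

end

theorem mainTheorem1:
  fixes n k :: nat and M :: "nat set set" and I :: "nat \<Rightarrow> nat set" and j a :: nat
  assumes "positroid_necklace n k M I"
    and "j \<in> {1..n}"
    and "neck_perm n I j \<noteq> j"
    and "a \<in> {1..n}"
    and "j \<notin> I a"
  shows "I a - I j \<noteq> {} \<and>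
         ((I a - {cmax n a (I a - I j)}) \<union> {j}) \<in> {H \<in> M. j \<in> H}"
proof -
  have pn: "grassmann_necklace n I" "\<forall>t\<in>{1..n}. card (I t) = k"
    "M = {H \<in> ksubsets n k. \<forall>t\<in>{1..n}. gale_le n t (I t) H}"
    using assms(1) unfolding positroid_necklace_def by blast+
  interpret neck n k I by (rule neck.intro) (rule pn(1), rule pn(2))
  have r: "I a - I j \<noteq> {} \<and>
    ((I a - {cmax n a (I a - I j)}) \<union> {j}) \<in> ksubsets n k \<and>
    (\<forall>t\<in>{1..n}. gale_le n t (I t) ((I a - {cmax n a (I a - I j)}) \<union> {j}))"
    by (rule main[OF assms(2-5)])
  show ?thesis using r pn(3) by blast
qed

end
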